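(* Let $n\geqslant 2$, $\lambda>0$, let $p_1,\ldots,p_M\in\mathbb{Z}^n$ be distinct points and $n_1,\ldots,n_M$ positive integers, and write $g=4\pi\sum_{j=1}^M n_j\delta_{p_j}$. Let $u$ be the maximal topological solution of the Chern–Simons equation $$\Delta u=\lambda e^u(e^u-1)+g\ \text{ on }\mathbb{Z}^n,\qquad \lim_{d(x)\to+\infty}u(x)=0$$ (i.e. the solution $u$ of this problem with $f\leqslant u$ for every other solution $f$ of this problem; such $u$ exists). Then the Abelian Higgs equation $$\Delta u'=\lambda(e^{u'}-1)+g\ \text{ on }\mathbb{Z}^n,\qquad \lim_{d(x)\to+\infty}u'(x)=0$$ has a unique solution $u'$, this solution satisfies $u'\in l^p(\mathbb{Z}^n)$ for every $1\leqslant p\leqslant\infty$ and $u\leqslant u'\leqslant 0$ on $\mathbb{Z}^n$, and, with $m=\ln(1+\frac{\lambda}{2n})$, for every $0<\epsilon<1$ one has $u'(x)=O(e^{-m(1-\epsilon)d(x)})$ as $d(x)\to+\infty$.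
   Context: $\mathbb{Z}^n$ is the integer lattice graph: vertices are the points of $\mathbb{Z}^n$, and $x\sim y$ iff $\sum_{i=1}^n|x_i-y_i|=1$. The distance is $d(x,y)=\sum_{i=1}^n|x_i-y_i|$ and $d(x)=d(x,0)$. The Laplacian is $\Delta u(x)=\sum_{y\sim x}(u(y)-u(x))$. $\delta_p$ denotes the function on $\mathbb{Z}^n$ equal to $1$ at $p$ and $0$ elsewhere. $l^p(\mathbb{Z}^n)$ denotes the usual sequence spaces on $\mathbb{Z}^n$. *)

theory Defs
  imports "HOL-Analysis.Analysis"
begin

text \<open>The lattice Z^n is modelled as the type int ^ 'n, where 'n is a finite
index type with CARD('n) = n.\<close>

definition ldist :: "int ^ 'n \<Rightarrow> int ^ 'n \<Rightarrow> int" where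
  "ldist x y = (\<Sum>i\<in>UNIV. \<bar>x $ i - y $ i\<bar>)"

definition ldnorm :: "int ^ 'n \<Rightarrow> int" where
  "ldnorm x = ldist x 0"

definition lnbrs :: "int ^ 'n \<Rightarrow> (int ^ 'n) set" where
  "lnbrs x = {y. ldist x y = 1}"

definition llap :: "(int ^ 'n \<Rightarrow> real) \<Rightarrow> int ^ 'n \<Rightarrow> real" where
  "llap u x = (\<Sum>y\<in>lnbrs x. (u y - u x))"

definition ldelta :: "int ^ 'n \<Rightarrow> int ^ 'n \<Rightarrow> real" where
  "ldelta p x = (if x = p then 1 else 0)"

definition vanishes_at_infinity :: "(int ^ 'n \<Rightarrow> real) \<Rightarrow> bool" where
  "vanishes_at_infinity u \<longleftrightarrow>
     (\<forall>e>0. \<exists>R. \<forall>x. real_of_int (ldnorm x) > R \<longrightarrow> \<bar>u x\<bar> < e)"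

definition CS_solution :: "real \<Rightarrow> (int ^ 'n \<Rightarrow> real) \<Rightarrow> (int ^ 'n \<Rightarrow> real) \<Rightarrow> bool" where
  "CS_solution lam g u \<longleftrightarrow>
     (\<forall>x. llap u x = lam * exp (u x) * (exp (u x) - 1) + g x) \<and> vanishes_at_infinity u"

definition AH_solution :: "real \<Rightarrow> (int ^ 'n \<Rightarrow> real) \<Rightarrow> (int ^ 'n \<Rightarrow> real) \<Rightarrow> bool" where
  "AH_solution lam g u \<longleftrightarrow>
     (\<forall>x. llap u x = lam * (exp (u x) - 1) + g x) \<and> vanishes_at_infinity u"

definition in_lp :: "real \<Rightarrow> (int ^ 'n \<Rightarrow> real) \<Rightarrow> bool" where
  "in_lp p u \<longleftrightarrow> (\<lambda>x. \<bar>u x\<bar> powr p) summable_on UNIV"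

definition in_linf :: "(int ^ 'n \<Rightarrow> real) \<Rightarrow> bool" where
  "in_linf u \<longleftrightarrow> (\<exists>C. \<forall>x. \<bar>u x\<bar> \<le> C)"

end

theory Submission
  imports Defs
begin

definition uvec :: "'n::finite \<Rightarrow> int ^ 'n" where
  "uvec i = (\<chi> j. if j = i then 1 else 0)"

lemma ldist_uvec_plus: "ldist x (x + uvec i) = 1"
  unfolding ldist_def uvec_def by (simp add: if_distrib cong: if_cong)

lemma ldist_uvec_minus: "ldist x (x - uvec i) = 1"
  unfolding ldist_def uvec_def by (simp add: if_distrib cong: if_cong)

lemma ldist_one_D:
  fixes x y :: "int ^ 'n::finite"
  assumes "ldist x y = 1"
  shows "\<exists>i. y = x + uvec i \<or> y = x - uvec i"
proof -
  have s: "(\<Sum>j\<in>UNIV. \<bar>x $ j - y $ j\<bar>) = 1" using assms by (simp add: ldist_def)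
  then obtain i where i: "\<bar>x $ i - y $ i\<bar> \<noteq> 0"
    by (metis (mono_tags, lifting) sum.neutral zero_neq_one)
  have "(\<Sum>j\<in>UNIV. \<bar>x $ j - y $ j\<bar>) = \<bar>x $ i - y $ i\<bar> + (\<Sum>j\<in>UNIV - {i}. \<bar>x $ j - y $ j\<bar>)"
    by (simp add: sum.remove)
  moreover have "(\<Sum>j\<in>UNIV - {i}. \<bar>x $ j - y $ j\<bar>) \<ge> 0" by (simp add: sum_nonneg)
  ultimately have a: "\<bar>x $ i - y $ i\<bar> = 1" and b: "(\<Sum>j\<in>UNIV - {i}. \<bar>x $ j - y $ j\<bar>) = 0"
    using s i by linarith+
  from b have c: "\<forall>j\<in>UNIV - {i}. \<bar>x $ j - y $ j\<bar> = 0"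
    by (subst sum_nonneg_eq_0_iff[symmetric]) auto
  from a have "y $ i = x $ i + 1 \<or> y $ i = x $ i - 1" by linarith
  then show ?thesis
  proof
    assume "y $ i = x $ i + 1"
    then have "y = x + uvec i" using c by (auto simp: vec_eq_iff uvec_def)
    then show ?thesis by blast
  next
    assume "y $ i = x $ i - 1"
    then have "y = x - uvec i" using c by (auto simp: vec_eq_iff uvec_def)
    then show ?thesis by blast
  qed
qed

lemma lnbrs_char: "lnbrs (x :: int ^ 'n::finite) = (\<Union>i. {x + uvec i, x - uvec i})"
proof (rule set_eqI)
  fix y
  show "y \<in> lnbrs x \<longleftrightarrow> y \<in> (\<Union>i. {x + uvec i, x - uvec i})"
  proof
    assume "y \<in> lnbrs x" then have "ldist x y = 1" by (simp add: lnbrs_def)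
    then obtain i where "y = x + uvec i \<or> y = x - uvec i" using ldist_one_D by blast
    then show "y \<in> (\<Union>i. {x + uvec i, x - uvec i})" by blast
  next
    assume "y \<in> (\<Union>i. {x + uvec i, x - uvec i})"
    then obtain i where "y = x + uvec i \<or> y = x - uvec i" by blast
    then show "y \<in> lnbrs x" by (auto simp: lnbrs_def ldist_uvec_plus ldist_uvec_minus)
  qed
qed

lemma finite_lnbrs: "finite (lnbrs (x :: int ^ 'n::finite))"
  unfolding lnbrs_char by auto

lemma card_lnbrs_pos: "card (lnbrs (x :: int ^ 'n::finite)) > 0"
  using finite_lnbrs[of x] unfolding lnbrs_char by (auto simp: card_gt_0_iff)

lemma uvec_ne: "i \<noteq> j \<Longrightarrow> uvec i \<noteq> (uvec j :: int ^ 'n::finite)"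
  by (auto simp: uvec_def vec_eq_iff) 

lemma llap_sum_pairs:
  fixes x :: "int ^ 'n::finite"
  shows "llap h x = (\<Sum>i\<in>UNIV. h (x + uvec i) + h (x - uvec i) - 2 * h x)"
proof -
  have disj: "\<forall>i\<in>UNIV. \<forall>j\<in>UNIV. i \<noteq> j \<longrightarrow> {x + uvec i, x - uvec i} \<inter> {x + uvec j, x - uvec j} = {}"
  proof (intro ballI impI)
    fix i j :: 'n assume "i \<noteq> j"
    then show "{x + uvec i, x - uvec i} \<inter> {x + uvec j, x - uvec j} = {}"
      by (auto simp: uvec_def vec_eq_iff)
  qed
  have ne: "x + uvec i \<noteq> x - uvec i" for i
    by (auto simp: uvec_def vec_eq_iff)
  have "llap h x = (\<Sum>y\<in>(\<Union>i\<in>UNIV. {x + uvec i, x - uvec i}). h y - h x)"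
    unfolding llap_def lnbrs_char by simp
  also have "\<dots> = (\<Sum>i\<in>UNIV. \<Sum>y\<in>{x + uvec i, x - uvec i}. h y - h x)"
    by (rule sum.UNION_disjoint) (use disj in auto)
  also have "\<dots> = (\<Sum>i\<in>UNIV. h (x + uvec i) + h (x - uvec i) - 2 * h x)"
    using ne by (simp add: sum.insert)
  finally show ?thesis .
qed

lemma ldnorm_nonneg: "ldnorm x \<ge> 0"
  unfolding ldnorm_def ldist_def by (simp add: sum_nonneg)

lemma abs_comp_le_ldnorm: "\<bar>x $ i\<bar> \<le> ldnorm (x :: int ^ 'n::finite)"
proof -
  have "\<bar>x $ i\<bar> \<le> (\<Sum>j\<in>UNIV. \<bar>x $ j\<bar>)" by (rule member_le_sum) auto
  then show ?thesis unfolding ldnorm_def ldist_def by simp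
qed

lemma finite_box: "finite {x::int^'n::finite. \<forall>i. \<bar>x$i\<bar> \<le> N}"
proof -
  have "{x::int^'n. \<forall>i. \<bar>x$i\<bar> \<le> N} \<subseteq> vec_lambda ` (PiE UNIV (\<lambda>_. {-N..N}))"
  proof
    fix x :: "int^'n" assume "x \<in> {x. \<forall>i. \<bar>x$i\<bar> \<le> N}"
    then have A: "\<forall>i. \<bar>x$i\<bar> \<le> N" by simp
    have "x$i \<in> {-N..N}" for i using A[rule_format, of i] by (auto simp: abs_le_iff)
    then have "vec_nth x \<in> PiE UNIV (\<lambda>_. {-N..N})" by (auto simp: PiE_UNIV_domain)
    then show "x \<in> vec_lambda ` (PiE UNIV (\<lambda>_. {-N..N}))"
      by (metis image_eqI vec_nth_inverse)
  qed
  moreover have "finite (vec_lambda ` (PiE UNIV (\<lambda>_::'n. {-N..N})))"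
    by (intro finite_imageI finite_PiE) auto
  ultimately show ?thesis by (rule finite_subset)
qed

lemma finite_ball: "finite {x::int^'n::finite. real_of_int (ldnorm x) \<le> R}"
proof -
  have "{x::int^'n. real_of_int (ldnorm x) \<le> R} \<subseteq> {x. \<forall>i. \<bar>x$i\<bar> \<le> \<lceil>R\<rceil>}"
  proof safe
    fix x :: "int^'n" and i assume "real_of_int (ldnorm x) \<le> R"
    then have "ldnorm x \<le> \<lceil>R\<rceil>" by linarith
    then show "\<bar>x$i\<bar> \<le> \<lceil>R\<rceil>" using abs_comp_le_ldnorm[of x i] by linarith
  qed
  then show ?thesis using finite_box finite_subset by blast
qed

lemma vanish_max:
  fixes z :: "int ^ 'n::finite \<Rightarrow> real"
  assumes "vanishes_at_infinity z" "z x1 > 0"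
  shows "\<exists>x0. z x0 > 0 \<and> (\<forall>y. z y \<le> z x0)"
proof -
  obtain R where R: "\<And>x. real_of_int (ldnorm x) > R \<Longrightarrow> \<bar>z x\<bar> < z x1"
    using assms unfolding vanishes_at_infinity_def by blast
  define S where "S = {x::int^'n. real_of_int (ldnorm x) \<le> R}"
  have fS: "finite S" unfolding S_def by (rule finite_ball)
  have x1S: "x1 \<in> S" using R[of x1] unfolding S_def by force
  have "Max (z ` S) \<in> z ` S" using fS x1S by (intro Max_in) auto
  then obtain x0 where x0: "x0 \<in> S" "z x0 = Max (z ` S)" by auto
  have le: "z y \<le> z x0" if "y \<in> S" for y using x0 fS that by simp
  have z1: "z x1 \<le> z x0" using le x1S .
  have z2: "z y \<le> z x0" for y
  proof (cases "y \<in> S")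
    case True then show ?thesis using le by blast
  next
    case False then have "\<bar>z y\<bar> < z x1" using R unfolding S_def by force
    then show ?thesis using z1 by linarith
  qed
  have "z x0 > 0" using assms(2) z1 by linarith
  then show ?thesis using z2 by blast
qed

lemma llap_at_max: "(\<forall>y. z y \<le> z x0) \<Longrightarrow> llap z x0 \<le> 0"
  unfolding llap_def by (rule sum_nonpos) auto

lemma llap_lin: "llap (\<lambda>x. f x - c * h x) x = llap f x - c * llap h x"
proof -
  have "llap (\<lambda>x. f x - c*h x) x = (\<Sum>y\<in>lnbrs x. (f y - f x) - c*(h y - h x))"
    unfolding llap_def by (rule sum.cong) (auto simp: algebra_simps)
  also have "\<dots> = (\<Sum>y\<in>lnbrs x. f y - f x) - (\<Sum>y\<in>lnbrs x. c*(h y - h x))" by (rule sum_subtractf)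
  also have "\<dots> = llap f x - c * llap h x" unfolding llap_def by (simp add: sum_distrib_left)
  finally show ?thesis .
qed

lemma llap_diff: "llap (\<lambda>x. f x - h x) x = llap f x - llap h x"
  using llap_lin[of f 1 h x] by simp

lemma llap_neg: "llap (\<lambda>x. - f x) x = - llap f x"
  using llap_lin[of "\<lambda>_. 0" 1 f x] by (simp add: llap_def)

lemma llap_split: "llap f x = sum f (lnbrs x) - real (card (lnbrs x)) * f x"
  unfolding llap_def by (simp add: sum_subtractf)

lemma vanish_diff:
  fixes f h :: "int ^ 'n::finite \<Rightarrow> real"
  assumes "vanishes_at_infinity f" "vanishes_at_infinity h"
  shows "vanishes_at_infinity (\<lambda>x. f x - h x)"
  unfolding vanishes_at_infinity_def
proof (intro allI impI)
  fix e :: real assume e: "e > 0"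
  then have e2: "e/2 > 0" by simp
  obtain R1 where R1: "\<forall>x::int^'n. real_of_int (ldnorm x) > R1 \<longrightarrow> \<bar>f x\<bar> < e/2"
    using assms(1) e2 unfolding vanishes_at_infinity_def by blast
  obtain R2 where R2: "\<forall>x::int^'n. real_of_int (ldnorm x) > R2 \<longrightarrow> \<bar>h x\<bar> < e/2"
    using assms(2) e2 unfolding vanishes_at_infinity_def by blast
  show "\<exists>R. \<forall>x::int^'n. real_of_int (ldnorm x) > R \<longrightarrow> \<bar>f x - h x\<bar> < e"
  proof (intro exI allI impI)
    fix x :: "int^'n" assume "real_of_int (ldnorm x) > max R1 R2"
    then have "\<bar>f x\<bar> < e/2" "\<bar>h x\<bar> < e/2" using R1 R2 by auto
    then show "\<bar>f x - h x\<bar> < e" by linarith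
  qed
qed

lemma vanish_squeeze:
  fixes f h :: "int ^ 'n::finite \<Rightarrow> real"
  assumes "vanishes_at_infinity h" "\<And>x. \<bar>f x\<bar> \<le> \<bar>h x\<bar>"
  shows "vanishes_at_infinity f"
  unfolding vanishes_at_infinity_def
proof (intro allI impI)
  fix e :: real assume "e > 0"
  then obtain R where R: "\<forall>x::int^'n. real_of_int (ldnorm x) > R \<longrightarrow> \<bar>h x\<bar> < e"
    using assms(1) unfolding vanishes_at_infinity_def by blast
  show "\<exists>R. \<forall>x::int^'n. real_of_int (ldnorm x) > R \<longrightarrow> \<bar>f x\<bar> < e"
  proof (intro exI allI impI)
    fix x :: "int^'n" assume "real_of_int (ldnorm x) > R"
    then have "\<bar>h x\<bar> < e" using R by blast
    then show "\<bar>f x\<bar> < e" using assms(2)[of x] by linarith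
  qed
qed

lemma vanish_bounded:
  fixes w :: "int ^ 'n::finite \<Rightarrow> real"
  assumes "vanishes_at_infinity w"
  shows "\<exists>B\<ge>0. \<forall>x. \<bar>w x\<bar> \<le> B"
proof -
  obtain R where R: "\<And>x. real_of_int (ldnorm x) > R \<Longrightarrow> \<bar>w x\<bar> < 1"
    using assms unfolding vanishes_at_infinity_def by (meson zero_less_one)
  define S where "S = {x::int^'n. real_of_int (ldnorm x) \<le> R}"
  have fS: "finite S" unfolding S_def by (rule finite_ball)
  define B where "B = 1 + (\<Sum>x\<in>S. \<bar>w x\<bar>)"
  have "\<bar>w x\<bar> \<le> B" for x
  proof (cases "x \<in> S")
    case True
    then have "\<bar>w x\<bar> \<le> (\<Sum>x\<in>S. \<bar>w x\<bar>)" using fS by (intro member_le_sum) auto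
    then show ?thesis unfolding B_def by linarith
  next
    case False
    then have "\<bar>w x\<bar> < 1" using R unfolding S_def by force
    moreover have "(\<Sum>x\<in>S. \<bar>w x\<bar>) \<ge> 0" by (simp add: sum_nonneg)
    ultimately show ?thesis unfolding B_def by linarith
  qed
  moreover have "B \<ge> 0" unfolding B_def by (simp add: sum_nonneg add_nonneg_nonneg)
  ultimately show ?thesis by blast
qed

definition phi :: "real \<Rightarrow> real \<Rightarrow> real \<Rightarrow> real" where
  "phi lam k t = k * t + lam * (exp t - 1)"

definition psi :: "real \<Rightarrow> real \<Rightarrow> real \<Rightarrow> real" where
  "psi lam k c = (THE t. phi lam k t = c)"

lemma phi_strict_mono:
  assumes "lam > 0" "k \<ge> 0" "s < t"
  shows "phi lam k s < phi lam k t"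
proof -
  have "exp s < exp t" using assms by simp
  then have "lam * (exp s - 1) < lam * (exp t - 1)" using assms by simp
  moreover have "k * s \<le> k * t" using assms by (simp add: mult_left_mono)
  ultimately show ?thesis unfolding phi_def by linarith
qed

lemma phi_mono_iff:
  assumes "lam > 0" "k \<ge> 0"
  shows "phi lam k s \<le> phi lam k t \<longleftrightarrow> s \<le> t"
proof
  assume h: "phi lam k s \<le> phi lam k t"
  show "s \<le> t"
  proof (rule ccontr)
    assume "\<not> s \<le> t" then have "t < s" by simp
    then have "phi lam k t < phi lam k s" by (rule phi_strict_mono[OF assms])
    then show False using h by simp
  qed
next
  assume h: "s \<le> t"
  show "phi lam k s \<le> phi lam k t"
  proof (cases "s = t")
    case False then have "s < t" using h by simp
    then show ?thesis using phi_strict_mono[OF assms] less_imp_le by blast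
  qed simp
qed

lemma phi_surj:
  assumes lam: "lam > 0" and k: "k > 0"
  shows "\<exists>t. phi lam k t = c"
proof -
  define a where "a = min 0 (c / k)"
  define b where "b = max 0 (c / (k + lam))"
  have "phi lam k a \<le> c"
  proof -
    have "a \<le> 0" unfolding a_def by simp
    then have "exp a - 1 \<le> 0" by simp
    then have "lam * (exp a - 1) \<le> 0" using lam by (simp add: mult_nonneg_nonpos)
    moreover have "k * a \<le> k * (c / k)" using k unfolding a_def by (intro mult_left_mono) auto
    ultimately show ?thesis unfolding phi_def using k by simp
  qed
  moreover have "c \<le> phi lam k b"
  proof -
    have "exp b - 1 \<ge> b" using exp_ge_add_one_self[of b] by linarith
    then have "lam * (exp b - 1) \<ge> lam * b" using lam by (intro mult_left_mono) auto
    moreover have "(k + lam) * b \<ge> (k + lam) * (c / (k + lam))" using k lam unfolding b_def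
      by (intro mult_left_mono) auto
    moreover have "(k + lam) * (c / (k + lam)) = c" using k lam by simp
    ultimately show ?thesis unfolding phi_def by (simp add: algebra_simps)
  qed
  moreover have "a \<le> b" unfolding a_def b_def by simp
  moreover have "continuous_on {a..b} (phi lam k)" unfolding phi_def by (intro continuous_intros)
  ultimately show ?thesis using IVT'[of "phi lam k" a c b] by blast
qed

lemma psi_eq:
  assumes "lam > 0" "k > 0"
  shows "phi lam k (psi lam k c) = c"
proof -
  obtain t where t: "phi lam k t = c" using phi_surj[OF assms] by blast
  have "\<exists>!t. phi lam k t = c"
  proof (rule ex1I[of _ t])
    show "phi lam k t = c" by fact
    fix s assume "phi lam k s = c"
    then have "phi lam k s \<le> phi lam k t" "phi lam k t \<le> phi lam k s" using t by simp_all
    then show "s = t" using phi_mono_iff[of lam k] assms by simp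
  qed
  then show ?thesis unfolding psi_def by (rule theI')
qed

lemma psi_phi:
  assumes "lam > 0" "k > 0"
  shows "psi lam k (phi lam k t) = t"
proof -
  have "phi lam k (psi lam k (phi lam k t)) = phi lam k t" by (rule psi_eq[OF assms])
  then have "phi lam k (psi lam k (phi lam k t)) \<le> phi lam k t" "phi lam k t \<le> phi lam k (psi lam k (phi lam k t))" by simp_all
  then show ?thesis using phi_mono_iff[of lam k] assms by simp
qed

lemma psi_mono:
  assumes "lam > 0" "k > 0" "c1 \<le> c2"
  shows "psi lam k c1 \<le> psi lam k c2"
proof -
  have "phi lam k (psi lam k c1) \<le> phi lam k (psi lam k c2)" using psi_eq[OF assms(1,2)] assms(3) by simp
  then show ?thesis using phi_mono_iff[of lam k] assms by simp
qed

lemma AH_exists: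
  fixes g u :: "int^'n::finite \<Rightarrow> real"
  assumes lam: "lam > 0" and gnn: "\<forall>x. g x \<ge> 0"
    and usub: "\<forall>x. llap u x \<ge> lam * (exp (u x) - 1) + g x" and uneg: "\<forall>x. u x \<le> 0"
  shows "\<exists>v. (\<forall>x. llap v x = lam * (exp (v x) - 1) + g x) \<and> (\<forall>x. u x \<le> v x \<and> v x \<le> 0)"
proof -
  define k :: "int^'n \<Rightarrow> real" where "k x = real (card (lnbrs x))" for x
  have kpos: "k x > 0" for x unfolding k_def using card_lnbrs_pos by simp
  define T where "T w x = psi lam (k x) (sum w (lnbrs x) - g x)" for w :: "int^'n \<Rightarrow> real" and x
  have Tmono: "T w1 x \<le> T w2 x" if "\<forall>y. w1 y \<le> w2 y" for w1 w2 x
    unfolding T_def using that by (intro psi_mono[OF lam kpos]) (simp add: sum_mono)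
  have Tu: "u x \<le> T u x" for x
  proof -
    have "phi lam (k x) (u x) \<le> sum u (lnbrs x) - g x"
      using usub[rule_format, of x] unfolding phi_def k_def llap_split by simp
    then have "psi lam (k x) (phi lam (k x) (u x)) \<le> T u x"
      unfolding T_def by (rule psi_mono[OF lam kpos])
    then show ?thesis using psi_phi[OF lam kpos] by simp
  qed
  have T0: "T (\<lambda>_. 0) x \<le> 0" for x
  proof -
    have "T (\<lambda>_. 0) x \<le> psi lam (k x) (phi lam (k x) 0)"
      unfolding T_def using gnn by (intro psi_mono[OF lam kpos]) (simp add: phi_def)
    then show ?thesis using psi_phi[OF lam kpos] by simp
  qed
  define A where "A = {w. (\<forall>x. u x \<le> w x \<and> w x \<le> 0) \<and> (\<forall>x. T w x \<le> w x)}"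
  have zeroA: "(\<lambda>_. 0) \<in> A" unfolding A_def using uneg T0 by simp
  define v where "v x = Inf ((\<lambda>w. w x) ` A)" for x
  have bdd: "bdd_below ((\<lambda>w. w x) ` A)" for x
    unfolding A_def by (rule bdd_belowI[of _ "u x"]) auto
  have ne: "(\<lambda>w. w x) ` A \<noteq> {}" for x using zeroA by blast
  have vle: "v x \<le> w x" if "w \<in> A" for w x
    unfolding v_def using that bdd by (intro cInf_lower) auto
  have uv: "u x \<le> v x" for x
    unfolding v_def using ne by (rule cInf_greatest) (auto simp: A_def)
  have v0: "v x \<le> 0" for x using vle[OF zeroA] by simp
  have Tv: "T v x \<le> v x" for x
    unfolding v_def[of x] using ne
  proof (rule cInf_greatest)
    fix y assume "y \<in> (\<lambda>w. w x) ` A"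
    then obtain w where w: "w \<in> A" "y = w x" by blast
    have "T v x \<le> T w x" using vle[OF w(1)] by (intro Tmono) auto
    also have "\<dots> \<le> w x" using w(1) unfolding A_def by blast
    finally show "T v x \<le> y" using w by simp
  qed
  have TvA: "T v \<in> A"
  proof -
    have "u x \<le> T v x" for x using Tu[of x] Tmono[of u v x] uv by force
    moreover have "T v x \<le> 0" for x using Tv[of x] v0[of x] by linarith
    moreover have "T (T v) x \<le> T v x" for x using Tv by (intro Tmono) auto
    ultimately show ?thesis unfolding A_def by blast
  qed
  have fixpt: "T v x = v x" for x using vle[OF TvA, of x] Tv[of x] by linarith
  have "llap v x = lam * (exp (v x) - 1) + g x" for x
  proof -
    have "phi lam (k x) (T v x) = sum v (lnbrs x) - g x"
      unfolding T_def by (rule psi_eq[OF lam kpos])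
    then have "k x * v x + lam * (exp (v x) - 1) = sum v (lnbrs x) - g x"
      using fixpt[of x] unfolding phi_def by simp
    then show ?thesis unfolding llap_split k_def by linarith
  qed
  then show ?thesis using uv v0 by blast
qed

lemma summable_exp_abs_int:
  fixes b :: real assumes b: "b > 0"
  shows "(\<lambda>k::int. exp (- b * \<bar>real_of_int k\<bar>)) summable_on UNIV"
proof -
  let ?f = "\<lambda>k::int. exp (- b * \<bar>real_of_int k\<bar>)"
  have geo: "summable (\<lambda>n::nat. exp (- b) ^ n)" using b by (intro summable_geometric) simp
  have e: "exp (- b * real n) = exp (- b) ^ n" for n :: nat
    using exp_of_nat_mult[of n "-b"] by (simp add: mult.commute)
  have s1: "?f summable_on range (\<lambda>n::nat. int n)"
  proof -
    have "(?f \<circ> (\<lambda>n::nat. int n)) summable_on UNIV"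
      using geo e by (subst summable_on_UNIV_nonneg_real_iff) (auto simp: o_def)
    then show ?thesis by (subst summable_on_reindex) (auto simp: inj_on_def)
  qed
  have s2: "?f summable_on range (\<lambda>n::nat. - int n)"
  proof -
    have "(?f \<circ> (\<lambda>n::nat. - int n)) summable_on UNIV"
      using geo e by (subst summable_on_UNIV_nonneg_real_iff) (auto simp: o_def)
    then show ?thesis by (subst summable_on_reindex) (auto simp: inj_on_def)
  qed
  have "UNIV = range (\<lambda>n::nat. int n) \<union> range (\<lambda>n::nat. - int n)"
  proof (rule set_eqI)
    fix k :: int
    show "k \<in> UNIV \<longleftrightarrow> k \<in> range (\<lambda>n::nat. int n) \<union> range (\<lambda>n::nat. - int n)"
    proof (cases "k \<ge> 0")
      case True then have "k = int (nat k)" by simp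
      then show ?thesis by blast
    next
      case False then have "k = - int (nat (- k))" by simp
      then show ?thesis by blast
    qed
  qed
  then show ?thesis using summable_on_union[OF s1 s2] by simp
qed

lemma ldnorm_sum: "real_of_int (ldnorm (x :: int ^ 'n::finite)) = (\<Sum>i\<in>UNIV. \<bar>real_of_int (x $ i)\<bar>)"
  unfolding ldnorm_def ldist_def by simp

lemma summable_exp_ldnorm:
  fixes b :: real assumes b: "b > 0"
  shows "(\<lambda>x::int^'n::finite. exp (- b * real_of_int (ldnorm x))) summable_on UNIV"
proof (rule nonneg_bdd_above_summable_on)
  let ?f = "\<lambda>k::int. exp (- b * \<bar>real_of_int k\<bar>)"
  define K where "K = infsum ?f UNIV"
  have sK: "sum ?f S \<le> K" if "finite S" for S
    unfolding K_def using summable_exp_abs_int[OF b] that by (intro finite_sum_le_infsum) auto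
  have prodeq: "exp (- b * real_of_int (ldnorm x)) = (\<Prod>i\<in>UNIV. ?f (x $ i))" for x :: "int^'n"
  proof -
    have "- b * real_of_int (ldnorm x) = (\<Sum>i\<in>UNIV. - b * \<bar>real_of_int (x $ i)\<bar>)"
      unfolding ldnorm_sum by (simp add: sum_distrib_left)
    then have "exp (- b * real_of_int (ldnorm x)) = exp (\<Sum>i\<in>UNIV. - b * \<bar>real_of_int (x $ i)\<bar>)"
      by simp
    also have "\<dots> = (\<Prod>i\<in>UNIV. ?f (x $ i))" by (rule exp_sum) simp
    finally show ?thesis .
  qed
  show "bdd_above (sum (\<lambda>x::int^'n. exp (- b * real_of_int (ldnorm x))) ` {F. F \<subseteq> UNIV \<and> finite F})"
  proof (rule bdd_aboveI)
    fix s assume "s \<in> sum (\<lambda>x::int^'n. exp (- b * real_of_int (ldnorm x))) ` {F. F \<subseteq> UNIV \<and> finite F}"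
    then obtain F :: "(int^'n) set" where F: "finite F" "s = (\<Sum>x\<in>F. exp (- b * real_of_int (ldnorm x)))" by blast
    define N where "N = (\<Sum>x\<in>F. ldnorm x)"
    define P where "P = PiE (UNIV::'n set) (\<lambda>_. {-N..N})"
    have fP: "finite P" unfolding P_def by (intro finite_PiE) auto
    have sub: "F \<subseteq> vec_lambda ` P"
    proof
      fix x assume xF: "x \<in> F"
      have "x$i \<in> {-N..N}" for i
      proof -
        have "ldnorm x \<le> N" unfolding N_def using F(1) xF ldnorm_nonneg by (intro member_le_sum) auto
        then show ?thesis using abs_comp_le_ldnorm[of x i] by (auto simp: abs_le_iff)
      qed
      then have "vec_nth x \<in> P" by (auto simp: P_def PiE_UNIV_domain)
      then show "x \<in> vec_lambda ` P" by (metis image_eqI vec_nth_inverse)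
    qed
    have "s \<le> (\<Sum>x\<in>vec_lambda ` P. exp (- b * real_of_int (ldnorm x)))"
      unfolding F(2) using fP sub by (intro sum_mono2) auto
    also have "\<dots> = (\<Sum>g\<in>P. exp (- b * real_of_int (ldnorm (vec_lambda g :: int^'n))))"
      by (subst sum.reindex) (auto simp: inj_on_def vec_lambda_inject)
    also have "\<dots> = (\<Sum>g\<in>P. \<Prod>i\<in>UNIV. ?f (g i))"
      unfolding prodeq by simp
    also have "\<dots> = (\<Prod>i\<in>(UNIV::'n set). \<Sum>k\<in>{-N..N}. ?f k)"
      unfolding P_def by (rule prod_sum_PiE[symmetric]) auto
    also have "\<dots> \<le> (\<Prod>i\<in>(UNIV::'n set). K)"
      by (intro prod_mono conjI sum_nonneg sK) auto
    finally show "s \<le> K ^ CARD('n)" by simp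
  qed
qed simp

lemma lp_from_decay:
  fixes v :: "int^'n::finite \<Rightarrow> real"
  assumes a: "a > 0" and dec: "\<forall>x. \<bar>v x\<bar> \<le> C * exp (- a * real_of_int (ldnorm x))" and q: "q > 0"
  shows "in_lp q v"
  unfolding in_lp_def
proof (rule summable_on_comparison_test)
  have l0: "ldnorm (0::int^'n) = 0" by (simp add: ldnorm_def ldist_def)
  have C: "C \<ge> 0" using dec[rule_format, of 0] unfolding l0 by simp
  show "(\<lambda>x. C powr q * exp (- (a * q) * real_of_int (ldnorm x))) summable_on UNIV"
    using a q by (intro summable_on_cmult_right summable_exp_ldnorm) simp
  fix x :: "int^'n"
  show "0 \<le> \<bar>v x\<bar> powr q" by simp
  have "\<bar>v x\<bar> powr q \<le> (C * exp (- a * real_of_int (ldnorm x))) powr q"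
    using dec q by (intro powr_mono2) auto
  also have "\<dots> = C powr q * exp (- (a * q) * real_of_int (ldnorm x))"
    using C by (simp add: powr_mult exp_powr_real algebra_simps)
  finally show "\<bar>v x\<bar> powr q \<le> C powr q * exp (- (a * q) * real_of_int (ldnorm x))" .
qed

lemma CS_nonpos:
  fixes u g :: "int^'n::finite \<Rightarrow> real"
  assumes lam: "lam > 0" and gnn: "\<forall>x. g x \<ge> 0" and sol: "CS_solution lam g u"
  shows "u x \<le> 0"
proof (rule ccontr)
  assume "\<not> u x \<le> 0"
  then obtain x0 where x0: "u x0 > 0" "\<forall>y. u y \<le> u x0"
    using vanish_max[of u x] sol unfolding CS_solution_def by force
  have "llap u x0 \<le> 0" using x0(2) by (rule llap_at_max)
  moreover have "exp (u x0) > 1" using x0(1) by simp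
  then have "lam * exp (u x0) * (exp (u x0) - 1) > 0" using lam by simp
  then have "llap u x0 > 0" using sol gnn[rule_format, of x0] unfolding CS_solution_def by (metis add_pos_nonneg)
  ultimately show False by linarith
qed

lemma AH_nonpos:
  fixes u g :: "int^'n::finite \<Rightarrow> real"
  assumes lam: "lam > 0" and gnn: "\<forall>x. g x \<ge> 0" and sol: "AH_solution lam g u"
  shows "u x \<le> 0"
proof (rule ccontr)
  assume "\<not> u x \<le> 0"
  then obtain x0 where x0: "u x0 > 0" "\<forall>y. u y \<le> u x0"
    using vanish_max[of u x] sol unfolding AH_solution_def by force
  have "llap u x0 \<le> 0" using x0(2) by (rule llap_at_max)
  moreover have "exp (u x0) > 1" using x0(1) by simp
  then have "lam * (exp (u x0) - 1) > 0" using lam by simp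
  then have "llap u x0 > 0" using sol gnn[rule_format, of x0] unfolding AH_solution_def by (metis add_pos_nonneg)
  ultimately show False by linarith
qed

lemma AH_le:
  fixes u1 u2 g :: "int^'n::finite \<Rightarrow> real"
  assumes lam: "lam > 0" and s1: "AH_solution lam g u1" and s2: "AH_solution lam g u2"
  shows "u1 x \<le> u2 x"
proof (rule ccontr)
  define z where "z y = u1 y - u2 y" for y
  assume "\<not> u1 x \<le> u2 x"
  then have "z x > 0" unfolding z_def by simp
  moreover have "vanishes_at_infinity z" unfolding z_def
    using s1 s2 unfolding AH_solution_def by (intro vanish_diff) auto
  ultimately obtain x0 where x0: "z x0 > 0" "\<forall>y. z y \<le> z x0"
    using vanish_max[of z x] by blast
  have "llap z x0 \<le> 0" using x0(2) by (rule llap_at_max)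
  moreover have "llap z x0 = lam * (exp (u1 x0) - exp (u2 x0))"
  proof -
    have e1: "llap u1 x0 = lam * (exp (u1 x0) - 1) + g x0" using s1 unfolding AH_solution_def by blast
    have e2: "llap u2 x0 = lam * (exp (u2 x0) - 1) + g x0" using s2 unfolding AH_solution_def by blast
    have "llap z x0 = llap u1 x0 - llap u2 x0" unfolding z_def by (rule llap_diff)
    then show ?thesis using e1 e2 by (simp add: algebra_simps)
  qed
  moreover have "exp (u1 x0) > exp (u2 x0)" using x0(1) unfolding z_def by simp
  ultimately show False using lam mult_pos_pos[of lam "exp (u1 x0) - exp (u2 x0)"] by linarith
qed

lemma CS_le_AH:
  fixes u v g :: "int^'n::finite \<Rightarrow> real"
  assumes lam: "lam > 0" and gnn: "\<forall>x. g x \<ge> 0"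
    and s1: "CS_solution lam g u" and s2: "AH_solution lam g v"
  shows "u x \<le> v x"
proof (rule ccontr)
  define z where "z y = u y - v y" for y
  assume "\<not> u x \<le> v x"
  then have "z x > 0" unfolding z_def by simp
  moreover have "vanishes_at_infinity z" unfolding z_def
    using s1 s2 unfolding AH_solution_def CS_solution_def by (intro vanish_diff) auto
  ultimately obtain x0 where x0: "z x0 > 0" "\<forall>y. z y \<le> z x0"
    using vanish_max[of z x] by blast
  have "llap z x0 \<le> 0" using x0(2) by (rule llap_at_max)
  moreover have "llap z x0 = lam * (exp (u x0) * (exp (u x0) - 1) - (exp (v x0) - 1))"
  proof -
    have e1: "llap u x0 = lam * exp (u x0) * (exp (u x0) - 1) + g x0" using s1 unfolding CS_solution_def by blast
    have e2: "llap v x0 = lam * (exp (v x0) - 1) + g x0" using s2 unfolding AH_solution_def by blast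
    have "llap z x0 = llap u x0 - llap v x0" unfolding z_def by (rule llap_diff)
    then show ?thesis using e1 e2 by (simp add: algebra_simps)
  qed
  moreover have "exp (u x0) * (exp (u x0) - 1) - (exp (v x0) - 1) > 0"
  proof -
    have "exp (u x0) > exp (v x0)" using x0(1) unfolding z_def by simp
    moreover have "exp (u x0) * (exp (u x0) - 1) - (exp (v x0) - 1)
        = (exp (u x0) - 1)^2 + (exp (u x0) - exp (v x0))" by (simp add: power2_eq_square algebra_simps)
    ultimately show ?thesis by (smt (verit) zero_le_power2)
  qed
  ultimately show False using lam mult_pos_pos[of lam "exp (u x0) * (exp (u x0) - 1) - (exp (v x0) - 1)"] by linarith
qed

lemma ldnorm_split: "ldnorm (z :: int^'n::finite) = \<bar>z$i\<bar> + (\<Sum>j\<in>UNIV-{i}. \<bar>z$j\<bar>)"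
  unfolding ldnorm_def ldist_def by (simp add: sum.remove)

lemma ldnorm_change:
  fixes x y :: "int^'n::finite"
  assumes "\<forall>j. j \<noteq> i \<longrightarrow> y$j = x$j"
  shows "ldnorm y = ldnorm x - \<bar>x$i\<bar> + \<bar>y$i\<bar>"
proof -
  have "(\<Sum>j\<in>UNIV-{i}. \<bar>y$j\<bar>) = (\<Sum>j\<in>UNIV-{i}. \<bar>x$j\<bar>)" using assms by (intro sum.cong) auto
  then show ?thesis using ldnorm_split[of y i] ldnorm_split[of x i] by linarith
qed

lemma ldnorm_plus_uvec: "ldnorm (x + uvec i) = ldnorm x - \<bar>x$i\<bar> + \<bar>x$i + 1\<bar>"
  using ldnorm_change[of i "x + uvec i" x] by (simp add: uvec_def)

lemma ldnorm_minus_uvec: "ldnorm (x - uvec i) = ldnorm x - \<bar>x$i\<bar> + \<bar>x$i - 1\<bar>"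
  using ldnorm_change[of i "x - uvec i" x] by (simp add: uvec_def)

lemma exp_pair_bound:
  fixes a :: real and d :: int
  assumes a: "a > 0"
  shows "exp (- a * (\<bar>real_of_int d + 1\<bar> - \<bar>real_of_int d\<bar>)) + exp (- a * (\<bar>real_of_int d - 1\<bar> - \<bar>real_of_int d\<bar>)) - 2
         \<le> exp a - 1"
proof -
  have e1: "exp (- a) \<le> 1" using a by simp
  have e2: "exp a \<ge> 1" using a by simp
  consider "d \<ge> 1" | "d \<le> -1" | "d = 0" by linarith
  then show ?thesis
  proof cases
    case 1
    then have "\<bar>real_of_int d + 1\<bar> - \<bar>real_of_int d\<bar> = 1" "\<bar>real_of_int d - 1\<bar> - \<bar>real_of_int d\<bar> = -1" by auto
    then show ?thesis using e1 by simp
  next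
    case 2
    then have "\<bar>real_of_int d + 1\<bar> - \<bar>real_of_int d\<bar> = -1" "\<bar>real_of_int d - 1\<bar> - \<bar>real_of_int d\<bar> = 1" by auto
    then show ?thesis using e1 by simp
  next
    case 3
    have "exp (- a) + exp (- a) - 2 \<le> exp a - 1" using e1 e2 by linarith
    then show ?thesis using 3 by simp
  qed
qed

lemma hlap_bound:
  fixes lam a :: real
  assumes a: "a > 0" and lam: "lam > 0" and ea: "exp a \<le> 1 + lam / (2 * real CARD('n::finite))"
  shows "llap (\<lambda>x::int^'n. exp (- a * real_of_int (ldnorm x))) x \<le> lam / 2 * exp (- a * real_of_int (ldnorm x))"
proof -
  define h where "h x = exp (- a * real_of_int (ldnorm x))" for x :: "int^'n"
  define H where "H = h x"
  have Hpos: "H > 0" unfolding H_def h_def by simp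
  have trm: "h (x + uvec i) + h (x - uvec i) - 2 * h x \<le> (exp a - 1) * H" for i
  proof -
    let ?d = "x $ i"
    have "h (x + uvec i) = H * exp (- a * (\<bar>real_of_int ?d + 1\<bar> - \<bar>real_of_int ?d\<bar>))"
      unfolding H_def h_def ldnorm_plus_uvec by (simp add: exp_add[symmetric] algebra_simps)
    moreover have "h (x - uvec i) = H * exp (- a * (\<bar>real_of_int ?d - 1\<bar> - \<bar>real_of_int ?d\<bar>))"
      unfolding H_def h_def ldnorm_minus_uvec by (simp add: exp_add[symmetric] algebra_simps)
    moreover have "H * (exp (- a * (\<bar>real_of_int ?d + 1\<bar> - \<bar>real_of_int ?d\<bar>)) + exp (- a * (\<bar>real_of_int ?d - 1\<bar> - \<bar>real_of_int ?d\<bar>)) - 2)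
          \<le> H * (exp a - 1)"
      using Hpos exp_pair_bound[OF a, of ?d] by (intro mult_left_mono) auto
    ultimately show ?thesis unfolding H_def by (simp add: algebra_simps)
  qed
  have "llap h x = (\<Sum>i\<in>UNIV. h (x + uvec i) + h (x - uvec i) - 2 * h x)" by (rule llap_sum_pairs)
  also have "\<dots> \<le> (\<Sum>i\<in>(UNIV::'n set). (exp a - 1) * H)" by (intro sum_mono trm)
  also have "\<dots> = real CARD('n) * (exp a - 1) * H" by simp
  also have "\<dots> \<le> lam / 2 * H"
  proof -
    have cpos: "real CARD('n) > 0" by simp
    have "real CARD('n) * (exp a - 1) \<le> real CARD('n) * (lam / (2 * real CARD('n)))"
      using ea cpos by (intro mult_left_mono) auto
    also have "\<dots> = lam / 2" using cpos by simp
    finally show ?thesis using Hpos by (intro mult_right_mono) auto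
  qed
  finally show ?thesis unfolding h_def H_def .
qed

lemma exp_aux: fixes t :: real assumes "0 \<le> t" "t \<le> 1" shows "t / 2 \<le> 1 - exp (- t)"
proof -
  define E where "E = exp (- t)"
  have Epos: "E > 0" unfolding E_def by simp
  have "E * (1 + t) \<le> E * exp t" using Epos exp_ge_add_one_self[of t] by (intro mult_left_mono) auto
  also have "E * exp t = 1" unfolding E_def by (simp add: exp_add[symmetric])
  finally have a1: "E * (1 + t) \<le> 1" .
  have "(1 - E) * (1 + t) = 1 + t - E * (1 + t)" by (simp add: algebra_simps)
  then have a2: "(1 - E) * (1 + t) \<ge> t" using a1 by linarith
  have "E \<le> 1" unfolding E_def using assms by simp
  then have "(1 - E) * (1 + t) \<le> (1 - E) * 2" using assms by (intro mult_left_mono) auto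
  then have b: "t \<le> (1 - E) * 2" using a2 by linarith
  have "(1 - E) * 2 = 2 - 2 * E" by simp
  then show ?thesis using b unfolding E_def by linarith
qed

lemma vanish_exp:
  fixes a C :: real assumes a: "a > 0"
  shows "vanishes_at_infinity (\<lambda>x::int^'n::finite. C * exp (- a * real_of_int (ldnorm x)))"
  unfolding vanishes_at_infinity_def
proof (intro allI impI)
  fix e :: real assume e: "e > 0"
  define R where "R = - ln (e / (\<bar>C\<bar> + 1)) / a"
  show "\<exists>R. \<forall>x::int^'n. real_of_int (ldnorm x) > R \<longrightarrow> \<bar>C * exp (- a * real_of_int (ldnorm x))\<bar> < e"
  proof (intro exI allI impI)
    fix x :: "int^'n" assume "real_of_int (ldnorm x) > R"
    then have "a * real_of_int (ldnorm x) > a * R" using a by simp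
    also have "a * R = - ln (e / (\<bar>C\<bar> + 1))" unfolding R_def using a by simp
    finally have "- a * real_of_int (ldnorm x) < ln (e / (\<bar>C\<bar> + 1))" by simp
    have c1: "\<bar>C\<bar> + 1 > 0" using abs_ge_zero[of C] by linarith
    have q: "e / (\<bar>C\<bar> + 1) > 0" using e c1 by simp
    have "exp (- a * real_of_int (ldnorm x)) < exp (ln (e / (\<bar>C\<bar> + 1)))"
      using \<open>- a * real_of_int (ldnorm x) < ln (e / (\<bar>C\<bar> + 1))\<close> by simp
    also have "\<dots> = e / (\<bar>C\<bar> + 1)" using q by simp
    finally have "exp (- a * real_of_int (ldnorm x)) * (\<bar>C\<bar> + 1) < e"
      using c1 by (simp add: pos_less_divide_eq)
    then have "(\<bar>C\<bar> + 1) * exp (- a * real_of_int (ldnorm x)) < e"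
      by (simp add: mult.commute)
    moreover have "\<bar>C * exp (- a * real_of_int (ldnorm x))\<bar> \<le> (\<bar>C\<bar> + 1) * exp (- a * real_of_int (ldnorm x))"
      by (simp add: abs_mult)
    ultimately show "\<bar>C * exp (- a * real_of_int (ldnorm x))\<bar> < e" by linarith
  qed
qed

lemma AH_decay:
  fixes v g :: "int^'n::finite \<Rightarrow> real"
  assumes lam: "lam > 0" and sol: "AH_solution lam g v" and vneg: "\<forall>x. v x \<le> 0"
    and gfar: "\<forall>x. real_of_int (ldnorm x) > Rg \<longrightarrow> g x = 0"
    and a: "a > 0" and ea: "exp a \<le> 1 + lam / (2 * real CARD('n))"
  shows "\<exists>C. \<forall>x. \<bar>v x\<bar> \<le> C * exp (- a * real_of_int (ldnorm x))"
proof -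
  define h where "h x = exp (- a * real_of_int (ldnorm x))" for x :: "int^'n"
  have hpos: "h x > 0" for x unfolding h_def by simp
  have hlap: "llap h x \<le> lam / 2 * h x" for x
    unfolding h_def using hlap_bound[OF a lam ea] .
  have vvan: "vanishes_at_infinity v" using sol unfolding AH_solution_def by blast
  have veq: "llap v x = lam * (exp (v x) - 1) + g x" for x using sol unfolding AH_solution_def by blast
  obtain W where W: "W \<ge> 0" "\<forall>x. \<bar>v x\<bar> \<le> W" using vanish_bounded[OF vvan] by blast
  obtain R1 where R1: "\<forall>x::int^'n. real_of_int (ldnorm x) > R1 \<longrightarrow> \<bar>v x\<bar> < 1"
    using vvan unfolding vanishes_at_infinity_def by (meson zero_less_one)
  define R where "R = max 0 (max R1 Rg)"
  define C where "C = W * exp (a * R)"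
  have C0: "C \<ge> 0" unfolding C_def using W by simp
  define w where "w x = - v x" for x
  have wlap: "llap w x \<ge> lam / 2 * w x" if "real_of_int (ldnorm x) > R" for x
  proof -
    have g0: "g x = 0" using gfar that unfolding R_def by auto
    have w1: "\<bar>v x\<bar> < 1" using R1 that unfolding R_def by auto
    have "llap w x = - llap v x" unfolding w_def by (rule llap_neg)
    also have "\<dots> = lam * (1 - exp (- w x))" using veq[of x] g0 unfolding w_def by (simp add: algebra_simps)
    finally have e: "llap w x = lam * (1 - exp (- w x))" .
    have "w x / 2 \<le> 1 - exp (- w x)" using vneg w1 unfolding w_def by (intro exp_aux) auto
    then have "lam * (w x / 2) \<le> lam * (1 - exp (- w x))" using lam by (intro mult_left_mono) auto
    then show ?thesis using e by simp
  qed
  define z where "z x = w x - C * h x" for x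
  have zvan: "vanishes_at_infinity z"
  proof -
    have "vanishes_at_infinity w" unfolding w_def by (rule vanish_squeeze[OF vvan]) simp
    moreover have "vanishes_at_infinity (\<lambda>x::int^'n. C * h x)" unfolding h_def by (rule vanish_exp[OF a])
    ultimately show ?thesis unfolding z_def by (rule vanish_diff)
  qed
  have zle: "z x \<le> 0" for x
  proof (rule ccontr)
    assume "\<not> z x \<le> 0"
    then obtain x0 where x0: "z x0 > 0" "\<forall>y. z y \<le> z x0" using vanish_max[OF zvan, of x] by auto
    have lz: "llap z x0 \<le> 0" using x0(2) by (rule llap_at_max)
    show False
    proof (cases "real_of_int (ldnorm x0) \<le> R")
      case True
      have "exp (- a * R) \<le> exp (- a * real_of_int (ldnorm x0))" using True a by simp
      then have "W * exp (a * R) * exp (- a * R) \<le> W * exp (a * R) * h x0"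
        unfolding h_def using W by (intro mult_left_mono) auto
      moreover have "exp (a * R) * exp (- a * R) = 1" by (simp add: exp_add[symmetric])
      ultimately have "W \<le> C * h x0" unfolding C_def by (simp add: mult.assoc)
      moreover have "w x0 \<le> W" using W unfolding w_def by (metis abs_le_D2)
      ultimately show False using x0(1) unfolding z_def by linarith
    next
      case False
      then have "real_of_int (ldnorm x0) > R" by simp
      have "llap z x0 = llap w x0 - C * llap h x0" unfolding z_def by (rule llap_lin)
      moreover have "llap w x0 \<ge> lam / 2 * w x0" using wlap \<open>real_of_int (ldnorm x0) > R\<close> by blast
      moreover have "C * llap h x0 \<le> C * (lam / 2 * h x0)" using C0 hlap by (intro mult_left_mono) auto
      ultimately have "llap z x0 \<ge> lam / 2 * z x0" unfolding z_def by (simp add: algebra_simps)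
      moreover have "lam / 2 * z x0 > 0" using lam x0(1) by simp
      ultimately show False using lz by linarith
    qed
  qed
  have "\<bar>v x\<bar> \<le> C * exp (- a * real_of_int (ldnorm x))" for x
    using zle[of x] vneg[rule_format, of x] unfolding z_def w_def h_def by simp
  then show ?thesis by blast
qed

theorem theorem1p2:
  fixes lam :: real and M :: nat
    and p :: "nat \<Rightarrow> int ^ 'n" and nn :: "nat \<Rightarrow> nat"
    and g u :: "int ^ 'n \<Rightarrow> real"
  assumes n2: "CARD('n) \<ge> 2"
    and lam: "lam > 0"
    and pdist: "inj_on p {1..M}"
    and npos: "\<forall>j\<in>{1..M}. nn j > 0"
    and g_def: "g = (\<lambda>x. 4 * pi * (\<Sum>j=1..M. real (nn j) * ldelta (p j) x))"
    and u_sol: "CS_solution lam g u"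
    and u_max: "\<forall>f. CS_solution lam g f \<longrightarrow> (\<forall>x. f x \<le> u x)"
  shows "(\<exists>!u'. AH_solution lam g u') \<and>
         (\<forall>u'. AH_solution lam g u' \<longrightarrow>
            (\<forall>q::real. q \<ge> 1 \<longrightarrow> in_lp q u') \<and> in_linf u' \<and>
            (\<forall>x. u x \<le> u' x \<and> u' x \<le> 0) \<and>
            (\<forall>e. 0 < e \<and> e < 1 \<longrightarrow>
               (\<exists>C R. \<forall>x. real_of_int (ldnorm x) > R \<longrightarrow>
                  \<bar>u' x\<bar> \<le> C * exp (- (ln (1 + lam / (2 * real CARD('n)))) * (1 - e)
                                        * real_of_int (ldnorm x)))))"
proof -
  have gnn: "\<forall>x. g x \<ge> 0"
  proof
    fix x
    have "(\<Sum>j=1..M. real (nn j) * ldelta (p j) x) \<ge> 0" by (intro sum_nonneg) (simp add: ldelta_def)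
    then show "g x \<ge> 0" unfolding g_def by simp
  qed
  define Rg where "Rg = real_of_int (\<Sum>j=1..M. ldnorm (p j))"
  have gfar: "\<forall>x. real_of_int (ldnorm x) > Rg \<longrightarrow> g x = 0"
  proof (intro allI impI)
    fix x :: "int^'n" assume xR: "real_of_int (ldnorm x) > Rg"
    have "x \<noteq> p j" if "j \<in> {1..M}" for j
    proof
      assume "x = p j"
      have "ldnorm (p j) \<le> (\<Sum>j=1..M. ldnorm (p j))"
        using that ldnorm_nonneg by (intro member_le_sum) auto
      then have "real_of_int (ldnorm (p j)) \<le> Rg" unfolding Rg_def by (simp only: of_int_le_iff)
      then show False using xR \<open>x = p j\<close> by simp
    qed
    then show "g x = 0" unfolding g_def ldelta_def by simp
  qed
  have uneg: "\<forall>x. u x \<le> 0" using CS_nonpos[OF lam gnn u_sol] by blast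
  have ueq: "llap u x = lam * exp (u x) * (exp (u x) - 1) + g x" for x
    using u_sol unfolding CS_solution_def by blast
  have usub: "\<forall>x. llap u x \<ge> lam * (exp (u x) - 1) + g x"
  proof
    fix x
    have "lam * exp (u x) * (exp (u x) - 1) - lam * (exp (u x) - 1) = lam * (exp (u x) - 1)^2"
      by (simp add: power2_eq_square algebra_simps)
    moreover have "lam * (exp (u x) - 1)^2 \<ge> 0" using lam by simp
    ultimately show "llap u x \<ge> lam * (exp (u x) - 1) + g x" using ueq[of x] by linarith
  qed
  obtain v where v: "\<forall>x. llap v x = lam * (exp (v x) - 1) + g x" "\<forall>x. u x \<le> v x \<and> v x \<le> 0"
    using AH_exists[OF lam gnn usub uneg] by blast
  have uvan: "vanishes_at_infinity u" using u_sol unfolding CS_solution_def by blast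
  have "vanishes_at_infinity v"
  proof (rule vanish_squeeze[OF uvan])
    fix x show "\<bar>v x\<bar> \<le> \<bar>u x\<bar>" using v(2)[rule_format, of x] by linarith
  qed
  then have vsol: "AH_solution lam g v" unfolding AH_solution_def using v(1) by blast
  have uniq: "\<exists>!u'. AH_solution lam g u'"
  proof (rule ex1I[of _ v])
    show "AH_solution lam g v" by (rule vsol)
    fix y assume "AH_solution lam g y"
    then show "y = v" using AH_le[OF lam vsol] AH_le[OF lam _ vsol] by (intro ext order.antisym) auto
  qed
  define m where "m = ln (1 + lam / (2 * real CARD('n)))"
  have lpos: "lam / (2 * real CARD('n)) > 0" using lam by simp
  have mpos: "m > 0" unfolding m_def using lpos by (intro ln_gt_zero) linarith
  have em: "exp m = 1 + lam / (2 * real CARD('n))" unfolding m_def using lpos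
    by (intro exp_ln) linarith
  have props: "(\<forall>q::real. q \<ge> 1 \<longrightarrow> in_lp q u') \<and> in_linf u' \<and>
            (\<forall>x. u x \<le> u' x \<and> u' x \<le> 0) \<and>
            (\<forall>e. 0 < e \<and> e < 1 \<longrightarrow>
               (\<exists>C R. \<forall>x. real_of_int (ldnorm x) > R \<longrightarrow>
                  \<bar>u' x\<bar> \<le> C * exp (- (ln (1 + lam / (2 * real CARD('n)))) * (1 - e)
                                        * real_of_int (ldnorm x))))"
    if s: "AH_solution lam g u'" for u'
  proof -
    have u'neg: "\<forall>x. u' x \<le> 0" using AH_nonpos[OF lam gnn s] by blast
    have dec: "\<exists>C. \<forall>x. \<bar>u' x\<bar> \<le> C * exp (- a * real_of_int (ldnorm x))" if "0 < a" "a \<le> m" for a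
    proof (rule AH_decay[OF lam s u'neg gfar \<open>0 < a\<close>])
      have "exp a \<le> exp m" using that by simp
      then show "exp a \<le> 1 + lam / (2 * real CARD('n))" using em by simp
    qed
    have lp: "in_lp q u'" if "q \<ge> 1" for q :: real
    proof -
      obtain C where C: "\<forall>x. \<bar>u' x\<bar> \<le> C * exp (- (m/2) * real_of_int (ldnorm x))"
        using dec[of "m/2"] mpos by auto
      show ?thesis using lp_from_decay[of "m/2" u' C q] C mpos that by simp
    qed
    have linf: "in_linf u'" unfolding in_linf_def
      using vanish_bounded[of u'] s unfolding AH_solution_def by blast
    have ord: "\<forall>x. u x \<le> u' x \<and> u' x \<le> 0" using CS_le_AH[OF lam gnn u_sol s] u'neg by blast
    have decay: "\<exists>C R. \<forall>x. real_of_int (ldnorm x) > R \<longrightarrow>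
                  \<bar>u' x\<bar> \<le> C * exp (- (ln (1 + lam / (2 * real CARD('n)))) * (1 - e)
                                        * real_of_int (ldnorm x))" if "0 < e \<and> e < 1" for e
    proof -
      have "0 < m * (1 - e)" using mpos that by simp
      moreover have "m * (1 - e) \<le> m" using mpos that by (simp add: mult_left_le)
      ultimately obtain C where C: "\<forall>x. \<bar>u' x\<bar> \<le> C * exp (- (m * (1 - e)) * real_of_int (ldnorm x))"
        using dec by blast
      have "\<forall>x. real_of_int (ldnorm x) > 0 \<longrightarrow>
                  \<bar>u' x\<bar> \<le> C * exp (- (ln (1 + lam / (2 * real CARD('n)))) * (1 - e)
                                        * real_of_int (ldnorm x))"
        using C unfolding m_def by (simp add: algebra_simps)
      then show ?thesis by blast
    qed
    show ?thesis using lp linf ord decay by blast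
  qed
  show ?thesis using uniq props by blast
qed

end
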